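(* Let $G$ be a graph such that each block of $G$ has a $(w,p)$-good tree decomposition. Then $G$ has a $(w,p+1)$-good tree decomposition.
   Context: A block of $G$ is a maximal 2-connected subgraph, the subgraph induced by the endpoints of a bridge, or the subgraph induced by an isolated vertex. A tree decomposition of $G$ is a family $(B_x\subseteq V(G): x\in V(T))$ indexed by the nodes of a tree $T$ such that each edge of $G$ has both endpoints in some bag and, for each $v\in V(G)$, the nodes $x$ with $v\in B_x$ induce a non-empty connected subtree $T[v]$ of $T$; its width is the maximum bag size minus 1. Pathwidth $\operatorname{pw}$ is the minimum width of a tree decomposition indexed by a path. A tree decomposition is $(w,p)$-good if its width is at most $w$ and $\operatorname{pw}(T[v])\le p$ for every $v\in V(G)$. *)

theory Defs
  imports Main
begin

definition is_graph :: "'a set \<Rightarrow> ('a \<Rightarrow> 'a \<Rightarrow> bool) \<Rightarrow> bool" where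
  "is_graph V E \<longleftrightarrow> finite V \<and>
     (\<forall>x y. E x y \<longrightarrow> x \<in> V \<and> y \<in> V \<and> x \<noteq> y \<and> E y x)"

definition induced :: "('a \<Rightarrow> 'a \<Rightarrow> bool) \<Rightarrow> 'a set \<Rightarrow> 'a \<Rightarrow> 'a \<Rightarrow> bool" where
  "induced E S = (\<lambda>x y. E x y \<and> x \<in> S \<and> y \<in> S)"

definition connected_graph :: "'a set \<Rightarrow> ('a \<Rightarrow> 'a \<Rightarrow> bool) \<Rightarrow> bool" where
  "connected_graph V E \<longleftrightarrow> (\<forall>x\<in>V. \<forall>y\<in>V. (induced E V)\<^sup>*\<^sup>* x y)"

definition del_edge :: "('a \<Rightarrow> 'a \<Rightarrow> bool) \<Rightarrow> 'a \<Rightarrow> 'a \<Rightarrow> 'a \<Rightarrow> 'a \<Rightarrow> bool" where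
  "del_edge E x y = (\<lambda>a b. E a b \<and> {a, b} \<noteq> {x, y})"

definition is_tree :: "'a set \<Rightarrow> ('a \<Rightarrow> 'a \<Rightarrow> bool) \<Rightarrow> bool" where
  "is_tree N F \<longleftrightarrow> is_graph N F \<and> N \<noteq> {} \<and> connected_graph N F \<and>
     (\<forall>x y. F x y \<longrightarrow> \<not> connected_graph N (del_edge F x y))"

definition is_path :: "'a set \<Rightarrow> ('a \<Rightarrow> 'a \<Rightarrow> bool) \<Rightarrow> bool" where
  "is_path N F \<longleftrightarrow> is_tree N F \<and> (\<forall>x\<in>N. card {y. F x y} \<le> 2)"

text \<open>Nodes of the tree whose bag contains v (the node set of T[v]).\<close>
definition bag_nodes :: "'b set \<Rightarrow> ('b \<Rightarrow> 'a set) \<Rightarrow> 'a \<Rightarrow> 'b set" where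
  "bag_nodes N B v = {x \<in> N. v \<in> B x}"

definition tree_decomp ::
  "'a set \<Rightarrow> ('a \<Rightarrow> 'a \<Rightarrow> bool) \<Rightarrow> 'b set \<Rightarrow> ('b \<Rightarrow> 'b \<Rightarrow> bool) \<Rightarrow> ('b \<Rightarrow> 'a set) \<Rightarrow> bool" where
  "tree_decomp V E N F B \<longleftrightarrow> is_tree N F \<and> (\<forall>x\<in>N. B x \<subseteq> V) \<and>
     (\<forall>u v. E u v \<longrightarrow> (\<exists>x\<in>N. u \<in> B x \<and> v \<in> B x)) \<and>
     (\<forall>v\<in>V. bag_nodes N B v \<noteq> {} \<and> connected_graph (bag_nodes N B v) (induced F (bag_nodes N B v)))"

definition width_le :: "'b set \<Rightarrow> ('b \<Rightarrow> 'a set) \<Rightarrow> nat \<Rightarrow> bool" where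
  "width_le N B w \<longleftrightarrow> (\<forall>x\<in>N. card (B x) \<le> w + 1)"

text \<open>pw(V,E) \<le> p: there is a tree decomposition indexed by a path of width at most p
(the indexing path is taken, w.l.o.g., on natural-number nodes).\<close>
definition pw_le :: "'a set \<Rightarrow> ('a \<Rightarrow> 'a \<Rightarrow> bool) \<Rightarrow> nat \<Rightarrow> bool" where
  "pw_le V E p \<longleftrightarrow> (\<exists>(P::nat set) Q C. is_path P Q \<and> tree_decomp V E P Q C \<and> width_le P C p)"

definition good_decomp ::
  "'a set \<Rightarrow> ('a \<Rightarrow> 'a \<Rightarrow> bool) \<Rightarrow> nat \<Rightarrow> nat \<Rightarrow> 'b set \<Rightarrow> ('b \<Rightarrow> 'b \<Rightarrow> bool) \<Rightarrow> ('b \<Rightarrow> 'a set) \<Rightarrow> bool" where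
  "good_decomp V E w p N F B \<longleftrightarrow> tree_decomp V E N F B \<and> width_le N B w \<and>
     (\<forall>v\<in>V. pw_le (bag_nodes N B v) (induced F (bag_nodes N B v)) p)"

text \<open>G has a (w,p)-good tree decomposition (tree nodes taken, w.l.o.g., to be naturals).\<close>
definition has_good_decomp :: "'a set \<Rightarrow> ('a \<Rightarrow> 'a \<Rightarrow> bool) \<Rightarrow> nat \<Rightarrow> nat \<Rightarrow> bool" where
  "has_good_decomp V E w p \<longleftrightarrow> (\<exists>(N::nat set) F B. good_decomp V E w p N F B)"

definition two_connected :: "'a set \<Rightarrow> ('a \<Rightarrow> 'a \<Rightarrow> bool) \<Rightarrow> bool" where
  "two_connected V E \<longleftrightarrow> card V \<ge> 3 \<and> connected_graph V E \<and>
     (\<forall>x\<in>V. connected_graph (V - {x}) (induced E (V - {x})))"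

definition is_block :: "'a set \<Rightarrow> ('a \<Rightarrow> 'a \<Rightarrow> bool) \<Rightarrow> 'a set \<Rightarrow> bool" where
  "is_block V E S \<longleftrightarrow> S \<subseteq> V \<and>
     ((two_connected S (induced E S) \<and>
        (\<forall>S'. S \<subset> S' \<and> S' \<subseteq> V \<longrightarrow> \<not> two_connected S' (induced E S'))) \<or>
      (\<exists>u v. S = {u, v} \<and> E u v \<and> \<not> connected_graph V (del_edge E u v)) \<or>
      (\<exists>v. S = {v} \<and> (\<forall>u. \<not> E v u)))"

end

theory Submission
  imports Defs
begin


lemma rtranclp_proj:
  assumes "R\<^sup>*\<^sup>* a b" and "\<And>x y. R x y \<Longrightarrow> g x = g y \<or> R' (g x) (g y)"
  shows "R'\<^sup>*\<^sup>* (g a) (g b)"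
  using assms(1)
proof (induction rule: rtranclp_induct)
  case base then show ?case by simp
next
  case (step y z)
  from assms(2)[OF step(2)] step(3) show ?case
    by (metis rtranclp.rtrancl_into_rtrancl)
qed

lemma rtranclp_symm:
  assumes "R\<^sup>*\<^sup>* a b" and "\<And>x y. R x y \<Longrightarrow> R y x"
  shows "R\<^sup>*\<^sup>* b a"
  using assms(1)
proof (induction rule: rtranclp_induct)
  case base then show ?case by simp
next
  case (step y z)
  then show ?case by (meson assms(2) converse_rtranclp_into_rtranclp)
qed

lemma conn_induced[simp]: "connected_graph X (induced R X) = connected_graph X R"
  unfolding connected_graph_def induced_def by simp

lemma conn_mono:
  assumes "connected_graph X R" and "\<And>a b. a\<in>X \<Longrightarrow> b\<in>X \<Longrightarrow> R a b \<Longrightarrow> S a b"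
  shows "connected_graph X S"
proof -
  have "induced R X \<le> induced S X" using assms(2) unfolding induced_def by auto
  then show ?thesis using assms(1) unfolding connected_graph_def
    by (meson rtranclp_mono predicate2D)
qed

lemma rtp_lift:
  assumes "(induced R X)\<^sup>*\<^sup>* a b" "X \<subseteq> Y" "\<And>a b. a\<in>X \<Longrightarrow> b\<in>X \<Longrightarrow> R a b \<Longrightarrow> S a b"
  shows "(induced S Y)\<^sup>*\<^sup>* a b"
proof -
  have "induced R X \<le> induced S Y" using assms(2,3) unfolding induced_def by auto
  then show ?thesis using assms(1) by (meson rtranclp_mono predicate2D)
qed

lemma conn_union:
  assumes "connected_graph X1 R" "connected_graph X2 R" "a\<in>X1" "b\<in>X2" "R a b" "R b a"
  shows "connected_graph (X1 \<union> X2) R"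
  unfolding connected_graph_def
proof (intro ballI)
  fix u v assume u: "u \<in> X1 \<union> X2" and v: "v \<in> X1 \<union> X2"
  let ?R = "induced R (X1 \<union> X2)"
  have l1: "?R\<^sup>*\<^sup>* s t" if "s\<in>X1" "t\<in>X1" for s t
  proof (rule rtp_lift[where X=X1 and R=R])
    show "(induced R X1)\<^sup>*\<^sup>* s t" using assms(1) that unfolding connected_graph_def by blast
  qed auto
  have l2: "?R\<^sup>*\<^sup>* s t" if "s\<in>X2" "t\<in>X2" for s t
  proof (rule rtp_lift[where X=X2 and R=R])
    show "(induced R X2)\<^sup>*\<^sup>* s t" using assms(2) that unfolding connected_graph_def by blast
  qed auto
  have ab: "?R a b" "?R b a" using assms(3-6) unfolding induced_def by auto
  show "?R\<^sup>*\<^sup>* u v"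
  proof -
    have "?R\<^sup>*\<^sup>* a b" "?R\<^sup>*\<^sup>* b a" using ab by auto
    then show ?thesis using u v l1 l2 assms(3,4)
      by (metis (no_types, lifting) Un_iff rtranclp_trans)
  qed
qed



definition edge_join :: "('b \<Rightarrow> 'b \<Rightarrow> bool) \<Rightarrow> ('b \<Rightarrow> 'b \<Rightarrow> bool) \<Rightarrow> 'b \<Rightarrow> 'b \<Rightarrow> 'b \<Rightarrow> 'b \<Rightarrow> bool" where
  "edge_join F1 F2 x y = (\<lambda>a b. F1 a b \<or> F2 a b \<or> (a = x \<and> b = y) \<or> (a = y \<and> b = x))"

lemma graph_edge: "is_graph N F \<Longrightarrow> F a b \<Longrightarrow> a \<in> N \<and> b \<in> N \<and> a \<noteq> b \<and> F b a"
  unfolding is_graph_def by blast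

lemma tree_graph: "is_tree N F \<Longrightarrow> is_graph N F"
  unfolding is_tree_def by blast

lemma tree_conn: "is_tree N F \<Longrightarrow> connected_graph N F"
  unfolding is_tree_def by blast

lemma tree_bridge: "is_tree N F \<Longrightarrow> F a b \<Longrightarrow> \<not> connected_graph N (del_edge F a b)"
  unfolding is_tree_def by blast

lemma bridge_side:
  assumes t1: "is_tree N1 F1" and t2: "is_tree N2 F2" and d: "N1 \<inter> N2 = {}"
    and x: "x \<in> N1" and y: "y \<in> N2" and e: "F1 a b"
  shows "\<not> connected_graph (N1 \<union> N2) (del_edge (edge_join F1 F2 x y) a b)"
proof
  assume c: "connected_graph (N1 \<union> N2) (del_edge (edge_join F1 F2 x y) a b)"
  define g where "g z = (if z \<in> N1 then z else x)" for z
  have "connected_graph N1 (del_edge F1 a b)"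
    unfolding connected_graph_def
  proof (intro ballI)
    fix u v assume u: "u \<in> N1" and v: "v \<in> N1"
    have "(induced (del_edge (edge_join F1 F2 x y) a b) (N1 \<union> N2))\<^sup>*\<^sup>* u v"
      using c u v unfolding connected_graph_def by blast
    then have "(induced (del_edge F1 a b) N1)\<^sup>*\<^sup>* (g u) (g v)"
    proof (rule rtranclp_proj)
      fix s t assume st: "induced (del_edge (edge_join F1 F2 x y) a b) (N1 \<union> N2) s t"
      then have F: "F1 s t \<or> F2 s t \<or> (s = x \<and> t = y) \<or> (s = y \<and> t = x)" and ne: "{s,t} \<noteq> {a,b}"
        unfolding induced_def del_edge_def edge_join_def by auto
      show "g s = g t \<or> induced (del_edge F1 a b) N1 (g s) (g t)"
      proof (cases "F1 s t")
        case True
        then have "s \<in> N1" "t \<in> N1" using graph_edge[OF tree_graph[OF t1]] by blast+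
        then show ?thesis using True ne unfolding g_def induced_def del_edge_def by auto
      next
        case False
        show ?thesis
        proof (cases "F2 s t")
          case True
          then have "s \<in> N2" "t \<in> N2" using graph_edge[OF tree_graph[OF t2]] by blast+
          then show ?thesis using d unfolding g_def by auto
        next
          case False2: False
          then have "(s = x \<and> t = y) \<or> (s = y \<and> t = x)" using F False by blast
          then show ?thesis using x y d unfolding g_def by auto
        qed
      qed
    qed
    then show "(induced (del_edge F1 a b) N1)\<^sup>*\<^sup>* u v" using u v unfolding g_def by simp
  qed
  then show False using tree_bridge[OF t1 e] by blast
qed

lemma edge_join_sym: "edge_join F1 F2 x y = edge_join F2 F1 y x"
  unfolding edge_join_def by (auto intro!: ext)

lemma tree_glue:
  assumes t1: "is_tree N1 F1" and t2: "is_tree N2 F2" and d: "N1 \<inter> N2 = {}"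
    and x: "x \<in> N1" and y: "y \<in> N2"
  shows "is_tree (N1 \<union> N2) (edge_join F1 F2 x y)"
proof -
  let ?F = "edge_join F1 F2 x y"
  have g1: "is_graph N1 F1" and g2: "is_graph N2 F2" using t1 t2 tree_graph by blast+
  have xy: "x \<noteq> y" using x y d by blast
  have gr: "is_graph (N1 \<union> N2) ?F"
    using g1 g2 x y xy unfolding is_graph_def edge_join_def by auto
  have ne: "N1 \<union> N2 \<noteq> {}" using x by blast
  have conn: "connected_graph (N1 \<union> N2) ?F"
  proof (rule conn_union)
    show "connected_graph N1 ?F" by (rule conn_mono[OF tree_conn[OF t1]]) (simp add: edge_join_def)
    show "connected_graph N2 ?F" by (rule conn_mono[OF tree_conn[OF t2]]) (simp add: edge_join_def)
  qed (use x y in \<open>auto simp: edge_join_def\<close>)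
  have br: "\<not> connected_graph (N1 \<union> N2) (del_edge ?F a b)" if e: "?F a b" for a b
  proof -
    consider "F1 a b" | "F2 a b" | "(a = x \<and> b = y) \<or> (a = y \<and> b = x)"
      using e unfolding edge_join_def by blast
    then show ?thesis
    proof cases
      case 1 then show ?thesis using bridge_side[OF t1 t2 d x y] by blast
    next
      case 2 then show ?thesis using bridge_side[OF t2 t1 _ y x, of a b] d
        by (simp add: edge_join_sym Un_commute Int_commute)
    next
      case 3
      have de: "del_edge ?F a b = del_edge ?F x y" using 3 unfolding del_edge_def
        by (auto intro!: ext simp: insert_commute)
      have inv: "z \<in> N1" if "(induced (del_edge ?F x y) (N1 \<union> N2))\<^sup>*\<^sup>* x z" for z
        using that
      proof (induction rule: rtranclp_induct)
        case base then show ?case using x .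
      next
        case (step s t)
        then have "F1 s t \<or> F2 s t \<or> (s = x \<and> t = y) \<or> (s = y \<and> t = x)" and "{s,t} \<noteq> {x,y}"
          unfolding induced_def del_edge_def edge_join_def by auto
        then have "F1 s t \<or> F2 s t" by (auto simp: insert_commute)
        then show ?case using step.IH graph_edge[OF g1] graph_edge[OF g2] d by blast
      qed
      show ?thesis
      proof
        assume "connected_graph (N1 \<union> N2) (del_edge ?F a b)"
        then have "(induced (del_edge ?F x y) (N1 \<union> N2))\<^sup>*\<^sup>* x y"
          using de x y unfolding connected_graph_def by auto
        then show False using inv y d by blast
      qed
    qed
  qed
  show ?thesis unfolding is_tree_def using gr ne conn br by blast
qed

lemma deg_finite: "is_graph N F \<Longrightarrow> finite {z. F a z}"
  unfolding is_graph_def by (metis (mono_tags, lifting) mem_Collect_eq rev_finite_subset subsetI)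

lemma path_glue:
  assumes p1: "is_path N1 F1" and p2: "is_path N2 F2" and d: "N1 \<inter> N2 = {}"
    and x: "x \<in> N1" and y: "y \<in> N2"
    and dx: "card {z. F1 x z} \<le> 1" and dy: "card {z. F2 y z} \<le> 1"
  shows "is_path (N1 \<union> N2) (edge_join F1 F2 x y)"
proof -
  have t1: "is_tree N1 F1" and t2: "is_tree N2 F2" using p1 p2 unfolding is_path_def by blast+
  have g1: "is_graph N1 F1" and g2: "is_graph N2 F2" using t1 t2 tree_graph by blast+
  have deg: "card {b. edge_join F1 F2 x y a b} \<le> 2" if a: "a \<in> N1 \<union> N2" for a
  proof (cases "a \<in> N1")
    case True
    have "{b. edge_join F1 F2 x y a b} = {b. F1 a b} \<union> (if a = x then {y} else {})"
      using True d graph_edge[OF g2, of a] x y unfolding edge_join_def by auto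
    moreover have "card {b. F1 a b} \<le> 2" using p1 True unfolding is_path_def by blast
    ultimately show ?thesis using dx deg_finite[OF g1, of a]
      by (cases "a = x") (auto simp: card_insert_if)
  next
    case False
    then have aN2: "a \<in> N2" using a by blast
    have "{b. edge_join F1 F2 x y a b} = {b. F2 a b} \<union> (if a = y then {x} else {})"
      using False graph_edge[OF g1, of a] x y unfolding edge_join_def by auto
    moreover have "card {b. F2 a b} \<le> 2" using p2 aN2 unfolding is_path_def by blast
    ultimately show ?thesis using dy deg_finite[OF g2, of a]
      by (cases "a = y") (auto simp: card_insert_if)
  qed
  show ?thesis unfolding is_path_def using tree_glue[OF t1 t2 d x y] deg by blast
qed



definition rel_map :: "('b \<Rightarrow> 'c) \<Rightarrow> 'b set \<Rightarrow> ('b \<Rightarrow> 'b \<Rightarrow> bool) \<Rightarrow> 'c \<Rightarrow> 'c \<Rightarrow> bool" where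
  "rel_map f N F = (\<lambda>a b. \<exists>x\<in>N. \<exists>y\<in>N. a = f x \<and> b = f y \<and> F x y)"

lemma conn_map:
  assumes "connected_graph X R"
  shows "connected_graph (f ` X) (rel_map f X R)"
  unfolding connected_graph_def
proof (intro ballI)
  fix a b assume "a \<in> f ` X" "b \<in> f ` X"
  then obtain u v where u: "u \<in> X" "a = f u" and v: "v \<in> X" "b = f v" by blast
  have "(induced R X)\<^sup>*\<^sup>* u v" using assms u v unfolding connected_graph_def by blast
  then have "(induced (rel_map f X R) (f ` X))\<^sup>*\<^sup>* (f u) (f v)"
    by (rule rtranclp_proj) (auto simp: induced_def rel_map_def)
  then show "(induced (rel_map f X R) (f ` X))\<^sup>*\<^sup>* a b" using u v by simp
qed

lemma tree_map:
  assumes t: "is_tree N F" and inj: "inj_on f N"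
  shows "is_tree (f ` N) (rel_map f N F)"
proof -
  have g: "is_graph N F" using t tree_graph by blast
  have gr: "is_graph (f ` N) (rel_map f N F)"
    using g inj unfolding is_graph_def rel_map_def inj_on_def by blast
  have conn: "connected_graph (f ` N) (rel_map f N F)" using conn_map tree_conn[OF t] by blast
  have br: "\<not> connected_graph (f ` N) (del_edge (rel_map f N F) a b)" if e: "rel_map f N F a b" for a b
  proof
    assume c: "connected_graph (f ` N) (del_edge (rel_map f N F) a b)"
    obtain x y where xy: "x \<in> N" "y \<in> N" "a = f x" "b = f y" "F x y" using e unfolding rel_map_def by blast
    define g where "g = inv_into N f"
    have gf: "g (f z) = z" if "z \<in> N" for z using inj that unfolding g_def by simp
    have "connected_graph N (del_edge F x y)"
      unfolding connected_graph_def
    proof (intro ballI)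
      fix u v assume u: "u \<in> N" and v: "v \<in> N"
      have "(induced (del_edge (rel_map f N F) a b) (f ` N))\<^sup>*\<^sup>* (f u) (f v)"
        using c u v unfolding connected_graph_def by blast
      then have "(induced (del_edge F x y) N)\<^sup>*\<^sup>* (g (f u)) (g (f v))"
      proof (rule rtranclp_proj)
        fix s t assume st: "induced (del_edge (rel_map f N F) a b) (f ` N) s t"
        then obtain s' t' where "s' \<in> N" "t' \<in> N" "s = f s'" "t = f t'" "F s' t'" "{s, t} \<noteq> {a, b}"
          unfolding induced_def del_edge_def rel_map_def by blast
        moreover have "{s', t'} \<noteq> {x, y}" using calculation xy by auto
        ultimately show "g s = g t \<or> induced (del_edge F x y) N (g s) (g t)"
          using gf unfolding induced_def del_edge_def by auto
      qed
      then show "(induced (del_edge F x y) N)\<^sup>*\<^sup>* u v" using gf u v by simp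
    qed
    then show False using tree_bridge[OF t xy(5)] by blast
  qed
  have ne: "f ` N \<noteq> {}" using t unfolding is_tree_def by blast
  show ?thesis unfolding is_tree_def using gr conn br ne by blast
qed

lemma rel_map_nbrs:
  assumes "inj_on f N" "x \<in> N" "is_graph N F"
  shows "{b. rel_map f N F (f x) b} = f ` {y. F x y}"
  using assms unfolding rel_map_def inj_on_def is_graph_def by blast

lemma path_map:
  assumes t: "is_path N F" and inj: "inj_on f N"
  shows "is_path (f ` N) (rel_map f N F)"
proof -
  have tt: "is_tree N F" using t unfolding is_path_def by blast
  have g: "is_graph N F" using tt tree_graph by blast
  have "card {b. rel_map f N F a b} \<le> 2" if aN: "a \<in> f ` N" for a
  proof -
    obtain x where x: "x \<in> N" "a = f x" using aN by blast
    have "card {b. rel_map f N F a b} = card (f ` {y. F x y})" using rel_map_nbrs[OF inj x(1) g] x by simp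
    also have "\<dots> \<le> card {y. F x y}" using deg_finite[OF g] card_image_le by blast
    also have "\<dots> \<le> 2" using t x unfolding is_path_def by blast
    finally show ?thesis .
  qed
  then show ?thesis unfolding is_path_def using tree_map[OF tt inj] by blast
qed

lemma induced_map:
  assumes "inj_on f N" "X \<subseteq> N"
  shows "induced (rel_map f N F) (f ` X) = rel_map f X (induced F X)"
  using assms unfolding induced_def rel_map_def inj_on_def by (auto intro!: ext) blast+

lemma bag_nodes_map:
  assumes "inj_on f N"
  shows "bag_nodes (f ` N) (\<lambda>a. B (inv_into N f a)) v = f ` bag_nodes N B v"
  using assms unfolding bag_nodes_def by force

lemma td_map:
  assumes td: "tree_decomp V E N F B" and inj: "inj_on f N"
  shows "tree_decomp V E (f ` N) (rel_map f N F) (\<lambda>a. B (inv_into N f a))"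
proof -
  let ?B = "\<lambda>a. B (inv_into N f a)"
  have t: "is_tree N F" using td unfolding tree_decomp_def by blast
  have bags: "\<forall>a\<in>f ` N. ?B a \<subseteq> V" using td inj unfolding tree_decomp_def by auto
  have edges: "\<forall>u v. E u v \<longrightarrow> (\<exists>a\<in>f ` N. u \<in> ?B a \<and> v \<in> ?B a)"
  proof (intro allI impI)
    fix u v assume "E u v"
    then obtain z where "z \<in> N" "u \<in> B z" "v \<in> B z" using td unfolding tree_decomp_def by blast
    then show "\<exists>a\<in>f ` N. u \<in> ?B a \<and> v \<in> ?B a" using inj by (intro bexI[of _ "f z"]) auto
  qed
  have sub: "\<forall>v\<in>V. bag_nodes (f ` N) ?B v \<noteq> {} \<and>
      connected_graph (bag_nodes (f ` N) ?B v) (induced (rel_map f N F) (bag_nodes (f ` N) ?B v))"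
  proof
    fix v assume v: "v \<in> V"
    have s: "bag_nodes N B v \<subseteq> N" unfolding bag_nodes_def by blast
    have ne: "bag_nodes N B v \<noteq> {}" and cc: "connected_graph (bag_nodes N B v) (induced F (bag_nodes N B v))"
      using td v unfolding tree_decomp_def by blast+
    have "connected_graph (f ` bag_nodes N B v) (rel_map f (bag_nodes N B v) (induced F (bag_nodes N B v)))"
      by (rule conn_map[OF cc])
    then show "bag_nodes (f ` N) ?B v \<noteq> {} \<and>
      connected_graph (bag_nodes (f ` N) ?B v) (induced (rel_map f N F) (bag_nodes (f ` N) ?B v))"
      unfolding bag_nodes_map[OF inj] induced_map[OF inj s]
      using ne by blast
  qed
  show ?thesis unfolding tree_decomp_def using tree_map[OF t inj] bags edges sub by blast
qed

lemma width_map: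
  assumes "width_le N B w" "inj_on f N"
  shows "width_le (f ` N) (\<lambda>a. B (inv_into N f a)) w"
  using assms unfolding width_le_def by auto

lemma pw_map:
  assumes pw: "pw_le X R k" and inj: "inj_on f X"
  shows "pw_le (f ` X) (rel_map f X R) k"
proof -
  obtain P :: "nat set" and Q C where pq: "is_path P Q" and td: "tree_decomp X R P Q C" and wd: "width_le P C k"
    using pw unfolding pw_le_def by blast
  let ?C = "\<lambda>i. f ` C i"
  have Csub: "\<forall>i\<in>P. C i \<subseteq> X" using td unfolding tree_decomp_def by blast
  have bn: "bag_nodes P ?C (f v) = bag_nodes P C v" if "v \<in> X" for v
    using Csub inj that unfolding bag_nodes_def inj_on_def by blast
  have t: "is_tree P Q" using td unfolding tree_decomp_def by blast
  have edges: "\<forall>u v. rel_map f X R u v \<longrightarrow> (\<exists>i\<in>P. u \<in> ?C i \<and> v \<in> ?C i)"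
  proof (intro allI impI)
    fix u v assume "rel_map f X R u v"
    then obtain s t where "u = f s" "v = f t" "R s t" unfolding rel_map_def by blast
    then show "\<exists>i\<in>P. u \<in> ?C i \<and> v \<in> ?C i" using td unfolding tree_decomp_def by blast
  qed
  have nodes: "\<forall>a\<in>f ` X. bag_nodes P ?C a \<noteq> {} \<and> connected_graph (bag_nodes P ?C a) (induced Q (bag_nodes P ?C a))"
    using td bn unfolding tree_decomp_def by auto
  have td': "tree_decomp (f ` X) (rel_map f X R) P Q ?C"
    unfolding tree_decomp_def using t Csub edges nodes by blast
  have wd': "width_le P ?C k"
    using wd Csub inj unfolding width_le_def by (metis card_image inj_on_subset)
  show ?thesis unfolding pw_le_def using pq td' wd' by blast
qed



lemma rtranclp_closure:
  assumes "R\<^sup>*\<^sup>* u v" and "\<And>s t. R s t \<Longrightarrow> R'\<^sup>*\<^sup>* s t"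
  shows "R'\<^sup>*\<^sup>* u v"
  using assms(1)
proof (induction rule: rtranclp_induct)
  case base then show ?case by simp
next
  case (step y z) then show ?case using assms(2) by (meson rtranclp_trans)
qed

lemma handshake:
  fixes Q :: "nat \<Rightarrow> nat \<Rightarrow> bool"
  assumes fin: "finite K" and sym: "\<And>a b. Q a b \<Longrightarrow> Q b a" and irr: "\<And>a. \<not> Q a a"
  shows "even (\<Sum>z\<in>K. card {u\<in>K. Q z u})"
proof -
  define S where "S = (SIGMA z:K. {u\<in>K. Q z u})"
  have finS: "finite S" unfolding S_def using fin by auto
  have cS: "card S = (\<Sum>z\<in>K. card {u\<in>K. Q z u})" unfolding S_def using fin by simp
  define S1 where "S1 = {p\<in>S. fst p < snd p}"
  define S2 where "S2 = {p\<in>S. snd p < fst p}"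
  have un: "S = S1 \<union> S2" unfolding S1_def S2_def S_def using irr by (auto, metis linorder_neqE_nat)
  have dj: "S1 \<inter> S2 = {}" unfolding S1_def S2_def by auto
  have sw: "S2 = prod.swap ` S1" unfolding S1_def S2_def S_def using sym by force
  have "card S2 = card S1" unfolding sw by (rule card_image) (auto simp: inj_on_def)
  moreover have "card S = card S1 + card S2"
    unfolding un by (rule card_Un_disjoint) (use finS un dj in auto)
  ultimately show ?thesis using cS by simp
qed

lemma path_endpoint:
  fixes P :: "nat set"
  assumes p: "is_path P Q"
  shows "\<exists>e\<in>P. card {z. Q e z} \<le> 1"
proof (rule ccontr)
  assume "\<not> ?thesis"
  then have d2: "card {z. Q e z} = 2" if "e \<in> P" for e using p that unfolding is_path_def by force
  have t: "is_tree P Q" using p unfolding is_path_def by blast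
  have g: "is_graph P Q" using t tree_graph by blast
  have finP: "finite P" using g unfolding is_graph_def by blast
  obtain a where a: "a \<in> P" using t unfolding is_tree_def by blast
  have "{z. Q a z} \<noteq> {}" using d2[OF a] by (metis card.empty zero_neq_numeral)
  then obtain b where ab: "Q a b" by blast
  have b: "b \<in> P" "a \<noteq> b" using graph_edge[OF g ab] by blast+
  define D where "D = induced (del_edge Q a b) P"
  define K where "K = {z\<in>P. D\<^sup>*\<^sup>* a z}"
  have Dsym: "D s t \<Longrightarrow> D t s" for s t using graph_edge[OF g] unfolding D_def induced_def del_edge_def
    by (auto simp: insert_commute)
  have bK: "b \<notin> K"
  proof
    assume "b \<in> K"
    then have Dab: "D\<^sup>*\<^sup>* a b" unfolding K_def by blast
    have "connected_graph P (del_edge Q a b)"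
      unfolding connected_graph_def
    proof (intro ballI)
      fix u v assume "u \<in> P" "v \<in> P"
      then have "(induced Q P)\<^sup>*\<^sup>* u v" using tree_conn[OF t] unfolding connected_graph_def by blast
      then show "(induced (del_edge Q a b) P)\<^sup>*\<^sup>* u v"
      proof (rule rtranclp_closure)
        fix s t assume st: "induced Q P s t"
        show "(induced (del_edge Q a b) P)\<^sup>*\<^sup>* s t"
        proof (cases "{s,t} = {a,b}")
          case True
          then have "(s = a \<and> t = b) \<or> (s = b \<and> t = a)" by (metis doubleton_eq_iff)
          then show ?thesis using Dab rtranclp_symm[OF Dab Dsym] unfolding D_def by blast
        next
          case False
          then show ?thesis using st unfolding induced_def del_edge_def by auto
        qed
      qed
    qed
    then show False using tree_bridge[OF t ab] by blast
  qed
  have aK: "a \<in> K" unfolding K_def using a by simp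
  have finK: "finite K" using finP unfolding K_def by simp
  have other: "{u\<in>K. Q z u} = {u. Q z u}" if z: "z \<in> K" "z \<noteq> a" for z
  proof -
    have "u \<in> K" if "Q z u" for u
    proof -
      have "z \<noteq> b" using z bK by blast
      then have "D z u" using that z graph_edge[OF g that] unfolding D_def induced_def del_edge_def K_def
        by (auto simp: doubleton_eq_iff)
      then show ?thesis using z unfolding K_def D_def induced_def
        by (auto intro: rtranclp.rtrancl_into_rtrancl)
    qed
    then show ?thesis by blast
  qed
  have atA: "{u\<in>K. Q a u} = {u. Q a u} - {b}"
  proof -
    have "u \<in> K" if "Q a u" "u \<noteq> b" for u
    proof -
      have "D a u" using that a graph_edge[OF g that(1)] b unfolding D_def induced_def del_edge_def
        by (auto simp: doubleton_eq_iff)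
      then show ?thesis unfolding K_def D_def induced_def by auto
    qed
    then show ?thesis using bK by blast
  qed
  have ca: "card {u\<in>K. Q a u} = 1" unfolding atA using d2[OF a] ab deg_finite[OF g, of a]
    by (simp add: card_Diff_singleton)
  have co: "card {u\<in>K. Q z u} = 2" if "z \<in> K - {a}" for z
    using other[of z] that d2[of z] unfolding K_def by auto
  have "(\<Sum>z\<in>K. card {u\<in>K. Q z u}) = card {u\<in>K. Q a u} + (\<Sum>z\<in>K - {a}. card {u\<in>K. Q z u})"
    using finK aK by (simp add: sum.remove)
  also have "\<dots> = 1 + 2 * card (K - {a})" using ca co by simp
  finally have "odd (\<Sum>z\<in>K. card {u\<in>K. Q z u})" by simp
  moreover have "even (\<Sum>z\<in>K. card {u\<in>K. Q z u})"
    using handshake[OF finK] graph_edge[OF g] by blast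
  ultimately show False by blast
qed



lemma leaf_remove:
  fixes P :: "nat set"
  assumes p: "is_path P Q" and td: "tree_decomp X Y P Q C" and wd: "width_le P C k"
    and e: "e \<in> P" and de: "card {z. Q e z} \<le> 1" and Ce: "C e = {}" and cP: "card P \<ge> 2"
  shows "is_path (P - {e}) (induced Q (P - {e})) \<and> tree_decomp X Y (P - {e}) (induced Q (P - {e})) C
         \<and> width_le (P - {e}) C k"
proof -
  define P' where "P' = P - {e}"
  define Q' where "Q' = induced Q P'"
  have t: "is_tree P Q" using p unfolding is_path_def by blast
  have g: "is_graph P Q" using t tree_graph by blast
  have finP: "finite P" using g unfolding is_graph_def by blast
  obtain u where u: "u \<in> P" "u \<noteq> e"
  proof -
    have "\<not> P \<subseteq> {e}"
    proof
      assume "P \<subseteq> {e}"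
      then have "card P \<le> card {e}" by (rule card_mono[rotated]) simp
      then show False using cP by simp
    qed
    then show ?thesis using that by blast
  qed
  have "(induced Q P)\<^sup>*\<^sup>* e u" using tree_conn[OF t] e u unfolding connected_graph_def by blast
  then obtain j where "induced Q P e j" using u(2) by (metis converse_rtranclpE)
  then have ej: "Q e j" by (simp add: induced_def)
  have onlyj: "z = j" if "Q e z" for z
    using de deg_finite[OF g, of e] that ej card_le_Suc0_iff_eq[of "{z. Q e z}"] by auto
  have jP': "j \<in> P'" using graph_edge[OF g ej] unfolding P'_def by blast
  have gr: "is_graph P' Q'" using g finP unfolding is_graph_def P'_def Q'_def induced_def by auto
  have ne: "P' \<noteq> {}" using jP' by blast
  have conn: "connected_graph P' Q'"
    unfolding connected_graph_def
  proof (intro ballI)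
    fix a b assume a: "a \<in> P'" and b: "b \<in> P'"
    define h where "h z = (if z = e then j else z)" for z
    have "(induced Q P)\<^sup>*\<^sup>* a b" using tree_conn[OF t] a b unfolding connected_graph_def P'_def by blast
    then have "(induced Q' P')\<^sup>*\<^sup>* (h a) (h b)"
    proof (rule rtranclp_proj)
      fix s t assume st: "induced Q P s t"
      show "h s = h t \<or> induced Q' P' (h s) (h t)"
      proof (cases "s = e \<or> t = e")
        case True
        then have "s = e \<and> t = j \<or> t = e \<and> s = j"
          using st onlyj graph_edge[OF g] unfolding induced_def by blast
        then show ?thesis unfolding h_def by auto
      next
        case False
        then show ?thesis using st unfolding h_def induced_def Q'_def P'_def by auto
      qed
    qed
    then show "(induced Q' P')\<^sup>*\<^sup>* a b" using a b unfolding h_def P'_def by auto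
  qed
  have br: "\<not> connected_graph P' (del_edge Q' a b)" if ab: "Q' a b" for a b
  proof
    assume c: "connected_graph P' (del_edge Q' a b)"
    let ?D = "induced (del_edge Q a b) P"
    have abP: "a \<in> P'" "b \<in> P'" "Q a b" using ab unfolding Q'_def induced_def by auto
    have toj: "?D\<^sup>*\<^sup>* z j" if z: "z \<in> P" for z
    proof (cases "z = e")
      case True
      have "?D e j" using ej e abP jP' unfolding induced_def del_edge_def P'_def by auto
      then show ?thesis using True by auto
    next
      case False
      then have "(induced (del_edge Q' a b) P')\<^sup>*\<^sup>* z j" using c z jP' unfolding connected_graph_def P'_def by blast
      then show ?thesis by (rule rtp_lift) (auto simp: P'_def Q'_def del_edge_def induced_def)
    qed
    have Dsym: "?D s t \<Longrightarrow> ?D t s" for s t using graph_edge[OF g] unfolding induced_def del_edge_def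
      by (auto simp: insert_commute)
    have "connected_graph P (del_edge Q a b)"
      unfolding connected_graph_def
      using toj rtranclp_symm[OF toj Dsym] by (meson rtranclp_trans)
    then show False using tree_bridge[OF t abP(3)] by blast
  qed
  have deg: "card {z. Q' a z} \<le> 2" if "a \<in> P'" for a
  proof -
    have "card {z. Q' a z} \<le> card {z. Q a z}"
      by (rule card_mono[OF deg_finite[OF g]]) (auto simp: Q'_def induced_def)
    also have "\<dots> \<le> 2" using p that unfolding is_path_def P'_def by blast
    finally show ?thesis .
  qed
  have path': "is_path P' Q'" unfolding is_path_def is_tree_def using gr ne conn br deg by blast
  have bn: "bag_nodes P' C v = bag_nodes P C v" for v using Ce unfolding bag_nodes_def P'_def by auto
  have td': "tree_decomp X Y P' Q' C"
    unfolding tree_decomp_def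
  proof (intro conjI)
    show "is_tree P' Q'" using path' unfolding is_path_def by blast
    show "\<forall>x\<in>P'. C x \<subseteq> X" using td unfolding tree_decomp_def P'_def by blast
    show "\<forall>u v. Y u v \<longrightarrow> (\<exists>x\<in>P'. u \<in> C x \<and> v \<in> C x)"
      using td Ce unfolding tree_decomp_def P'_def by fastforce
    show "\<forall>v\<in>X. bag_nodes P' C v \<noteq> {} \<and> connected_graph (bag_nodes P' C v) (induced Q' (bag_nodes P' C v))"
    proof
      fix v assume v: "v \<in> X"
      have "bag_nodes P C v \<noteq> {}" "connected_graph (bag_nodes P C v) Q"
        using td v unfolding tree_decomp_def by auto
      moreover have "bag_nodes P C v \<subseteq> P'" using bn unfolding bag_nodes_def by auto
      ultimately show "bag_nodes P' C v \<noteq> {} \<and> connected_graph (bag_nodes P' C v) (induced Q' (bag_nodes P' C v))"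
        unfolding bn conn_induced
        by (auto elim!: conn_mono simp: Q'_def induced_def)
    qed
  qed
  have wd': "width_le P' C k" using wd unfolding width_le_def P'_def by blast
  show ?thesis using path' td' wd' unfolding P'_def Q'_def by blast
qed

lemma pw_norm_aux:
  fixes P :: "nat set"
  assumes "card P = n" "is_path P Q" "tree_decomp X Y P Q C" "width_le P C k" "X \<noteq> {}"
  shows "\<exists>(P::nat set) Q C e. is_path P Q \<and> tree_decomp X Y P Q C \<and> width_le P C k \<and> e \<in> P
           \<and> card {z. Q e z} \<le> 1 \<and> C e \<noteq> {}"
  using assms
proof (induction n arbitrary: P Q C rule: less_induct)
  case (less n)
  obtain e where e: "e \<in> P" "card {z. Q e z} \<le> 1" using path_endpoint[OF less.prems(2)] by blast
  show ?case
  proof (cases "C e = {}")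
    case False
    then show ?thesis using less.prems e by blast
  next
    case True
    have finP: "finite P" using less.prems(2) unfolding is_path_def is_tree_def is_graph_def by blast
    have c2: "card P \<ge> 2"
    proof (rule ccontr)
      assume "\<not> card P \<ge> 2"
      then have "card P \<le> Suc 0" by simp
      then have Pe: "P = {e}" using e finP card_le_Suc0_iff_eq by blast
      obtain v where "v \<in> X" using less.prems(5) by blast
      then have "bag_nodes P C v \<noteq> {}" using less.prems(3) unfolding tree_decomp_def by blast
      then show False using Pe True unfolding bag_nodes_def by auto
    qed
    note r = leaf_remove[OF less.prems(2-4) e True c2]
    have "card (P - {e}) < n" using less.prems(1) e finP c2 by (simp add: card_Diff_singleton)
    then show ?thesis using less.IH r less.prems(5) by blast
  qed
qed

lemma pw_norm:
  assumes "pw_le X Y k" "X \<noteq> {}"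
  shows "\<exists>(P::nat set) Q C e. is_path P Q \<and> tree_decomp X Y P Q C \<and> width_le P C k \<and> e \<in> P
           \<and> card {z. Q e z} \<le> 1 \<and> C e \<noteq> {}"
  using assms pw_norm_aux unfolding pw_le_def by blast



lemma card_insert_le_Suc: "card (insert x A) \<le> Suc (card A)"
  by (cases "finite A") (auto simp: card_insert_if)

lemma path_decomp_join:
  fixes P1 P2 :: "nat set"
  assumes p1: "is_path P1 Q1" and td1: "tree_decomp X1 Y1 P1 Q1 C1" and w1: "width_le P1 C1 (Suc k)"
    and e1: "e1 \<in> P1" and de1: "card {z. Q1 e1 z} \<le> 1" and x: "x \<in> C1 e1"
    and p2: "is_path P2 Q2" and td2: "tree_decomp X2 Y2 P2 Q2 C2" and w2: "width_le P2 C2 k"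
    and e2: "e2 \<in> P2" and de2: "card {z. Q2 e2 z} \<le> 1" and y: "y \<in> X2"
    and dP: "P1 \<inter> P2 = {}" and dX: "X1 \<inter> X2 = {}"
  shows "pw_le (X1 \<union> X2) (edge_join Y1 Y2 x y) (Suc k)"
proof -
  let ?P = "P1 \<union> P2" and ?Q = "edge_join Q1 Q2 e1 e2"
  define C where "C z = (if z \<in> P1 then C1 z else insert x (C2 z))" for z
  have path: "is_path ?P ?Q" by (rule path_glue[OF p1 p2 dP e1 e2 de1 de2])
  have C1s: "\<forall>z\<in>P1. C1 z \<subseteq> X1" using td1 unfolding tree_decomp_def by blast
  have C2s: "\<forall>z\<in>P2. C2 z \<subseteq> X2" using td2 unfolding tree_decomp_def by blast
  have xX1: "x \<in> X1" using C1s e1 x by blast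
  have g1: "is_graph P1 Q1" and g2: "is_graph P2 Q2"
    using p1 p2 unfolding is_path_def is_tree_def by blast+
  have td: "tree_decomp (X1 \<union> X2) (edge_join Y1 Y2 x y) ?P ?Q C"
    unfolding tree_decomp_def
  proof (intro conjI)
    show "is_tree ?P ?Q" using path unfolding is_path_def by blast
    show "\<forall>z\<in>?P. C z \<subseteq> X1 \<union> X2" using C1s C2s xX1 unfolding C_def by auto
    show "\<forall>u v. edge_join Y1 Y2 x y u v \<longrightarrow> (\<exists>z\<in>?P. u \<in> C z \<and> v \<in> C z)"
    proof (intro allI impI)
      fix u v assume "edge_join Y1 Y2 x y u v"
      then consider "Y1 u v" | "Y2 u v" | "(u = x \<and> v = y) \<or> (u = y \<and> v = x)" unfolding edge_join_def by blast
      then show "\<exists>z\<in>?P. u \<in> C z \<and> v \<in> C z"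
      proof cases
        case 1 then show ?thesis using td1 unfolding tree_decomp_def C_def by fastforce
      next
        case 2
        then obtain z where "z \<in> P2" "u \<in> C2 z" "v \<in> C2 z" using td2 unfolding tree_decomp_def by blast
        then show ?thesis using dP unfolding C_def by (intro bexI[of _ z]) auto
      next
        case 3
        obtain z where "z \<in> bag_nodes P2 C2 y" using td2 y unfolding tree_decomp_def by blast
        then have "z \<in> P2" "y \<in> C2 z" unfolding bag_nodes_def by auto
        then show ?thesis using dP 3 unfolding C_def by (intro bexI[of _ z]) auto
      qed
    qed
    show "\<forall>v\<in>X1 \<union> X2. bag_nodes ?P C v \<noteq> {} \<and> connected_graph (bag_nodes ?P C v) (induced ?Q (bag_nodes ?P C v))"
    proof
      fix v assume v: "v \<in> X1 \<union> X2"
      show "bag_nodes ?P C v \<noteq> {} \<and> connected_graph (bag_nodes ?P C v) (induced ?Q (bag_nodes ?P C v))"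
        unfolding conn_induced
      proof (cases "v = x")
        case True
        have bn: "bag_nodes ?P C v = bag_nodes P1 C1 x \<union> P2"
          using True dP unfolding bag_nodes_def C_def by auto
        have c1: "connected_graph (bag_nodes P1 C1 x) ?Q"
          using td1 xX1 unfolding tree_decomp_def
          by (auto elim!: conn_mono simp: edge_join_def)
        have "connected_graph P2 Q2" using tree_conn p2 unfolding is_path_def by blast
        then have c2: "connected_graph P2 ?Q" by (rule conn_mono) (simp add: edge_join_def)
        have "e1 \<in> bag_nodes P1 C1 x" using e1 x unfolding bag_nodes_def by blast
        then have "connected_graph (bag_nodes P1 C1 x \<union> P2) ?Q"
          using conn_union[OF c1 c2 _ e2] by (auto simp: edge_join_def)
        then show "bag_nodes ?P C v \<noteq> {} \<and> connected_graph (bag_nodes ?P C v) ?Q"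
          unfolding bn using e2 by blast
      next
        case False
        show "bag_nodes ?P C v \<noteq> {} \<and> connected_graph (bag_nodes ?P C v) ?Q"
        proof (cases "v \<in> X1")
          case True
          then have "v \<notin> X2" using dX by blast
          then have bn: "bag_nodes ?P C v = bag_nodes P1 C1 v"
            using False C2s dP unfolding bag_nodes_def C_def by auto
          show ?thesis unfolding bn using td1 True unfolding tree_decomp_def
            by (auto elim!: conn_mono simp: edge_join_def)
        next
          case False2: False
          then have "v \<in> X2" using v by blast
          then have bn: "bag_nodes ?P C v = bag_nodes P2 C2 v"
            using False False2 C1s dP unfolding bag_nodes_def C_def by auto
          show ?thesis unfolding bn using td2 \<open>v \<in> X2\<close> unfolding tree_decomp_def
            by (auto elim!: conn_mono simp: edge_join_def)
        qed
      qed
    qed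
  qed
  have wd: "width_le ?P C (Suc k)"
    unfolding width_le_def
  proof
    fix z assume z: "z \<in> ?P"
    show "card (C z) \<le> Suc k + 1"
    proof (cases "z \<in> P1")
      case True then show ?thesis using w1 unfolding width_le_def C_def by auto
    next
      case False
      then have "z \<in> P2" using z by blast
      then have "card (C2 z) \<le> k + 1" using w2 unfolding width_le_def by blast
      then show ?thesis using False card_insert_le_Suc[of x "C2 z"] unfolding C_def by simp
    qed
  qed
  show ?thesis unfolding pw_le_def using path td wd by blast
qed

lemma path_relabel:
  fixes P :: "nat set" and f :: "nat \<Rightarrow> nat"
  assumes p: "is_path P Q" and td: "tree_decomp X Y P Q C" and wd: "width_le P C k"
    and e: "e \<in> P" and de: "card {z. Q e z} \<le> 1" and inj: "inj_on f P"
  shows "is_path (f ` P) (rel_map f P Q) \<and> tree_decomp X Y (f ` P) (rel_map f P Q) (\<lambda>a. C (inv_into P f a))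
    \<and> width_le (f ` P) (\<lambda>a. C (inv_into P f a)) k \<and> f e \<in> f ` P \<and> card {z. rel_map f P Q (f e) z} \<le> 1
    \<and> C (inv_into P f (f e)) = C e"
proof -
  have g: "is_graph P Q" using p unfolding is_path_def is_tree_def by blast
  have "card {z. rel_map f P Q (f e) z} = card (f ` {z. Q e z})" using rel_map_nbrs[OF inj e g] by simp
  also have "\<dots> \<le> card {z. Q e z}" using deg_finite[OF g] card_image_le by blast
  finally have "card {z. rel_map f P Q (f e) z} \<le> 1" using de by simp
  then show ?thesis using path_map[OF p inj] td_map[OF td inj] width_map[OF wd inj] e inj by simp
qed

lemma pw_insert:
  assumes pw1: "pw_le X1 Y1 (Suc k)" and pw2: "pw_le X2 Y2 k" and ne: "X1 \<noteq> {}"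
    and dX: "X1 \<inter> X2 = {}" and y: "y \<in> X2"
  shows "\<exists>x\<in>X1. pw_le (X1 \<union> X2) (edge_join Y1 Y2 x y) (Suc k)"
proof -
  obtain P1 :: "nat set" and Q1 C1 e1 where p1: "is_path P1 Q1" and td1: "tree_decomp X1 Y1 P1 Q1 C1"
    and w1: "width_le P1 C1 (Suc k)" and e1: "e1 \<in> P1" "card {z. Q1 e1 z} \<le> 1" "C1 e1 \<noteq> {}"
    using pw_norm[OF pw1 ne] by blast
  obtain P2 :: "nat set" and Q2 C2 where p2: "is_path P2 Q2" and td2: "tree_decomp X2 Y2 P2 Q2 C2"
    and w2: "width_le P2 C2 k" using pw2 unfolding pw_le_def by blast
  obtain e2 where e2: "e2 \<in> P2" "card {z. Q2 e2 z} \<le> 1" using path_endpoint[OF p2] by blast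
  obtain x where x: "x \<in> C1 e1" using e1(3) by blast
  have xX1: "x \<in> X1" using td1 e1 x unfolding tree_decomp_def by blast
  define f1 :: "nat \<Rightarrow> nat" where "f1 n = 2 * n" for n
  define f2 :: "nat \<Rightarrow> nat" where "f2 n = 2 * n + 1" for n
  have i1: "inj_on f1 P1" unfolding f1_def inj_on_def by simp
  have i2: "inj_on f2 P2" unfolding f2_def inj_on_def by simp
  have dP: "f1 ` P1 \<inter> f2 ` P2 = {}" unfolding f1_def f2_def by auto presburger
  note r1 = path_relabel[OF p1 td1 w1 e1(1,2) i1]
  note r2 = path_relabel[OF p2 td2 w2 e2 i2]
  let ?C1 = "\<lambda>a. C1 (inv_into P1 f1 a)" and ?C2 = "\<lambda>a. C2 (inv_into P2 f2 a)"
  have A1: "is_path (f1 ` P1) (rel_map f1 P1 Q1)" "tree_decomp X1 Y1 (f1 ` P1) (rel_map f1 P1 Q1) ?C1"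
    "width_le (f1 ` P1) ?C1 (Suc k)" "f1 e1 \<in> f1 ` P1" "card {z. rel_map f1 P1 Q1 (f1 e1) z} \<le> 1"
    "x \<in> ?C1 (f1 e1)" using r1 x by auto
  have A2: "is_path (f2 ` P2) (rel_map f2 P2 Q2)" "tree_decomp X2 Y2 (f2 ` P2) (rel_map f2 P2 Q2) ?C2"
    "width_le (f2 ` P2) ?C2 k" "f2 e2 \<in> f2 ` P2" "card {z. rel_map f2 P2 Q2 (f2 e2) z} \<le> 1"
    using r2 by auto
  have "pw_le (X1 \<union> X2) (edge_join Y1 Y2 x y) (Suc k)"
    by (rule path_decomp_join[OF A1 A2 y dP dX])
  then show ?thesis using xX1 by blast
qed



lemma sep_proj:
  assumes "(induced R W)\<^sup>*\<^sup>* u v" "u \<in> A" "v \<in> A" "W \<subseteq> A \<union> C" "A \<inter> C \<subseteq> {c}" "c \<in> A"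
    and sep: "\<And>a b. R a b \<Longrightarrow> a \<in> W \<Longrightarrow> b \<in> W \<Longrightarrow> (a \<in> A \<and> b \<in> A) \<or> (a \<in> C \<and> b \<in> C)"
  shows "(induced R A)\<^sup>*\<^sup>* u v"
proof -
  define g where "g z = (if z \<in> A then z else c)" for z
  have "(induced R A)\<^sup>*\<^sup>* (g u) (g v)"
  proof (rule rtranclp_proj[OF assms(1)])
    fix s t assume st: "induced R W s t"
    then have "R s t" "s \<in> W" "t \<in> W" unfolding induced_def by auto
    then have "(s \<in> A \<and> t \<in> A) \<or> (s \<in> C \<and> t \<in> C)" using sep by blast
    then show "g s = g t \<or> induced R A (g s) (g t)"
      using st assms(5) unfolding g_def induced_def by auto
  qed
  then show ?thesis using assms(2,3) unfolding g_def by simp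
qed

lemma sep_conn:
  assumes "connected_graph W R" "W \<subseteq> A \<union> C" "A \<subseteq> W" "A \<inter> C \<subseteq> {c}" "c \<in> A"
    and sep: "\<And>a b. R a b \<Longrightarrow> a \<in> W \<Longrightarrow> b \<in> W \<Longrightarrow> (a \<in> A \<and> b \<in> A) \<or> (a \<in> C \<and> b \<in> C)"
  shows "connected_graph A R"
  unfolding connected_graph_def
proof (intro ballI)
  fix u v assume "u \<in> A" "v \<in> A"
  then show "(induced R A)\<^sup>*\<^sup>* u v"
    using sep_proj[of R W u v A C c] assms unfolding connected_graph_def by blast
qed

lemma conn_del_mono: "connected_graph V (del_edge E u v) \<Longrightarrow> connected_graph V E"
  by (erule conn_mono) (simp add: del_edge_def)

lemma has_nbr:
  assumes "connected_graph A R" "a \<in> A" "b \<in> A" "a \<noteq> b"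
  shows "\<exists>t. R a t"
proof -
  have "(induced R A)\<^sup>*\<^sup>* a b" using assms unfolding connected_graph_def by blast
  then obtain t where "induced R A a t" using assms(4) by (metis converse_rtranclpE)
  then show ?thesis unfolding induced_def by blast
qed

lemma induced_sub[simp]: "S \<subseteq> A \<Longrightarrow> induced (induced E A) S = induced E S"
  unfolding induced_def by (auto intro!: ext)

lemma block_transfer:
  assumes gV: "is_graph V E" and V: "V = A \<union> C" and AC: "A \<inter> C \<subseteq> {c}"
    and sep: "\<And>a b. E a b \<Longrightarrow> (a \<in> A \<and> b \<in> A) \<or> (a \<in> C \<and> b \<in> C)"
    and cs: "(\<not> connected_graph V E \<and> A \<inter> C = {}) \<or> (c \<in> A \<and> connected_graph A (induced E A) \<and> (\<exists>a\<in>A. a \<noteq> c))"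
    and blk: "is_block A (induced E A) S"
  shows "is_block V E S"
proof -
  have SA: "S \<subseteq> A" using blk unfolding is_block_def by blast
  have SV: "S \<subseteq> V" using SA V by blast
  consider (tc) "two_connected S (induced (induced E A) S)"
      "\<forall>S'. S \<subset> S' \<and> S' \<subseteq> A \<longrightarrow> \<not> two_connected S' (induced (induced E A) S')"
    | (br) u v where "S = {u, v}" "induced E A u v" "\<not> connected_graph A (del_edge (induced E A) u v)"
    | (iso) v where "S = {v}" "\<forall>u. \<not> induced E A v u"
    using blk unfolding is_block_def by blast
  then show ?thesis
  proof cases
    case tc
    have tcS: "two_connected S (induced E S)" using tc(1) SA by simp
    have max: "\<not> two_connected S' (induced E S')" if S': "S \<subset> S'" "S' \<subseteq> V" for S'
    proof
      assume tS': "two_connected S' (induced E S')"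
      have "S' \<subseteq> A"
      proof (rule ccontr)
        assume "\<not> S' \<subseteq> A"
        then obtain z where z: "z \<in> S'" "z \<notin> A" by blast
        have "\<not> S \<subseteq> A \<inter> C"
        proof
          assume "S \<subseteq> A \<inter> C"
          then have "S \<subseteq> {c}" using AC by blast
          then have "card S \<le> card {c}" by (rule card_mono[rotated]) simp
          then have "card S \<le> 1" by simp
          then show False using tcS unfolding two_connected_def by simp
        qed
        then obtain s where s: "s \<in> S" "s \<notin> A \<inter> C" by blast
        define D where "D = S' - (A \<inter> C)"
        have cD: "connected_graph D (induced E D)"
        proof (cases "A \<inter> C = {}")
          case True
          then show ?thesis using tS' unfolding D_def two_connected_def by simp
        next
          case False
          then have "A \<inter> C = {c}" using AC by blast
          show ?thesis
          proof (cases "c \<in> S'")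
            case True
            then have "connected_graph (S' - {c}) (induced (induced E S') (S' - {c}))"
              using tS' unfolding two_connected_def by blast
            then show ?thesis unfolding D_def \<open>A \<inter> C = {c}\<close> by simp
          next
            case False
            then have "D = S'" unfolding D_def \<open>A \<inter> C = {c}\<close> by blast
            then show ?thesis using tS' unfolding two_connected_def by simp
          qed
        qed
        have sD: "s \<in> D" "z \<in> D" using s z S' unfolding D_def by auto
        have "(induced E D)\<^sup>*\<^sup>* s z" using cD sD unfolding connected_graph_def by simp
        moreover have "s \<in> A - C" using s SA by blast
        ultimately have "z \<in> A - C"
        proof (induction rule: rtranclp_induct)
          case base then show ?case .
        next
          case (step a b)
          then have "E a b" "b \<in> D" unfolding induced_def by auto
          then show ?case using sep[of a b] step.IH step.prems unfolding D_def by blast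
        qed
        then show False using z by blast
      qed
      then have "two_connected S' (induced (induced E A) S')" using tS' by simp
      then show False using tc(2) S' \<open>S' \<subseteq> A\<close> by blast
    qed
    show ?thesis unfolding is_block_def using SV tcS max by blast
  next
    case br
    have Euv: "E u v" using br(2) unfolding induced_def by blast
    have "\<not> connected_graph V (del_edge E u v)"
    proof
      assume c: "connected_graph V (del_edge E u v)"
      show False
      proof (cases "\<not> connected_graph V E \<and> A \<inter> C = {}")
        case True
        then show False using conn_del_mono[OF c] by blast
      next
        case False
        then have cA: "c \<in> A" using cs by blast
        have "connected_graph A (del_edge E u v)"
          by (rule sep_conn[OF c _ _ AC cA]) (use V sep in \<open>auto simp: del_edge_def\<close>)
        then have "connected_graph A (del_edge (induced E A) u v)"
          by (rule conn_mono) (simp add: del_edge_def induced_def)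
        then show False using br(3) by blast
      qed
    qed
    then show ?thesis unfolding is_block_def using SV br(1) Euv by blast
  next
    case iso
    have vA: "v \<in> A" using iso SA by blast
    have "\<not> E v u" for u
    proof
      assume e: "E v u"
      show False
      proof (cases "v \<in> C")
        case False
        then have "u \<in> A" using sep[OF e] by blast
        then show False using iso(2) vA e unfolding induced_def by blast
      next
        case True
        then have vc: "v = c" "A \<inter> C \<noteq> {}" using AC vA by blast+
        then have cA: "connected_graph A (induced E A)" and "\<exists>a\<in>A. a \<noteq> c" using cs by blast+
        then obtain a where a: "a \<in> A" "v \<noteq> a" using vc by blast
        obtain t where "induced E A v t" using has_nbr[OF cA vA a] by blast
        then show False using iso(2) by blast
      qed
    qed
    then show ?thesis unfolding is_block_def using SV iso(1) by blast
  qed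
qed



lemma bn_union:
  assumes "N1 \<inter> N2 = {}"
  shows "bag_nodes (N1 \<union> N2) (\<lambda>z. if z \<in> N1 then B1 z else B2 z) v = bag_nodes N1 B1 v \<union> bag_nodes N2 B2 v"
  using assms unfolding bag_nodes_def by auto

lemma bn_out: "tree_decomp A R N F B \<Longrightarrow> v \<notin> A \<Longrightarrow> bag_nodes N B v = {}"
  unfolding tree_decomp_def bag_nodes_def by blast

lemma bn_sub: "bag_nodes N B v \<subseteq> N"
  unfolding bag_nodes_def by blast

lemma induced_join1:
  assumes "is_graph N2 F2" "X \<subseteq> N1" "N1 \<inter> N2 = {}" "y \<in> N2"
  shows "induced (edge_join F1 F2 x y) X = induced F1 X"
  using assms graph_edge[OF assms(1)] unfolding induced_def edge_join_def by (auto intro!: ext)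

lemma induced_join2:
  assumes "is_graph N1 F1" "X \<subseteq> N2" "N1 \<inter> N2 = {}" "x \<in> N1"
  shows "induced (edge_join F1 F2 x y) X = induced F2 X"
  using assms graph_edge[OF assms(1)] unfolding induced_def edge_join_def by (auto intro!: ext)

lemma induced_join12:
  assumes "is_graph N1 F1" "is_graph N2 F2" "X1 \<subseteq> N1" "X2 \<subseteq> N2" "N1 \<inter> N2 = {}"
    and "induced (edge_join F1 F2 x y) (X1 \<union> X2) a b"
  shows "edge_join (induced F1 X1) (induced F2 X2) x y a b"
  using assms graph_edge[OF assms(1)] graph_edge[OF assms(2)] unfolding induced_def edge_join_def by blast

lemma pw_mono_rel: "pw_le X Y k \<Longrightarrow> (\<And>a b. Y' a b \<Longrightarrow> Y a b) \<Longrightarrow> pw_le X Y' k"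
  unfolding pw_le_def tree_decomp_def by blast

lemma pw_mono_k: "pw_le X Y k \<Longrightarrow> pw_le X Y (Suc k)"
  unfolding pw_le_def width_le_def by fastforce

lemma td_graph: "tree_decomp V E N F B \<Longrightarrow> is_graph N F"
  unfolding tree_decomp_def using tree_graph by blast

lemma decomp_glue:
  assumes td1: "tree_decomp A (induced E A) N1 F1 B1" and td2: "tree_decomp C (induced E C) N2 F2 B2"
    and d: "N1 \<inter> N2 = {}" and x: "x \<in> N1" and y: "y \<in> N2" and V: "V = A \<union> C" and AC: "A \<inter> C \<subseteq> {c}"
    and cxy: "c \<in> A \<inter> C \<Longrightarrow> c \<in> B1 x \<and> c \<in> B2 y"
    and sep: "\<And>a b. E a b \<Longrightarrow> (a \<in> A \<and> b \<in> A) \<or> (a \<in> C \<and> b \<in> C)"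
  shows "tree_decomp V E (N1 \<union> N2) (edge_join F1 F2 x y) (\<lambda>z. if z \<in> N1 then B1 z else B2 z)"
  unfolding tree_decomp_def
proof (intro conjI)
  let ?F = "edge_join F1 F2 x y" and ?B = "\<lambda>z. if z \<in> N1 then B1 z else B2 z"
  have t1: "is_tree N1 F1" and t2: "is_tree N2 F2" using td1 td2 unfolding tree_decomp_def by blast+
  have g1: "is_graph N1 F1" and g2: "is_graph N2 F2" using t1 t2 tree_graph by blast+
  show "is_tree (N1 \<union> N2) ?F" by (rule tree_glue[OF t1 t2 d x y])
  show "\<forall>z\<in>N1 \<union> N2. ?B z \<subseteq> V" using td1 td2 V unfolding tree_decomp_def by auto
  show "\<forall>u v. E u v \<longrightarrow> (\<exists>z\<in>N1 \<union> N2. u \<in> ?B z \<and> v \<in> ?B z)"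
  proof (intro allI impI)
    fix u v assume e: "E u v"
    show "\<exists>z\<in>N1 \<union> N2. u \<in> ?B z \<and> v \<in> ?B z"
    proof (cases "u \<in> A \<and> v \<in> A")
      case True
      then have "induced E A u v" using e unfolding induced_def by blast
      then obtain z where "z \<in> N1" "u \<in> B1 z" "v \<in> B1 z" using td1 unfolding tree_decomp_def by blast
      then show ?thesis by (intro bexI[of _ z]) auto
    next
      case False
      then have "induced E C u v" using e sep[OF e] unfolding induced_def by blast
      then obtain z where "z \<in> N2" "u \<in> B2 z" "v \<in> B2 z" using td2 unfolding tree_decomp_def by blast
      then show ?thesis using d by (intro bexI[of _ z]) auto
    qed
  qed
  show "\<forall>v\<in>V. bag_nodes (N1 \<union> N2) ?B v \<noteq> {} \<and>
      connected_graph (bag_nodes (N1 \<union> N2) ?B v) (induced ?F (bag_nodes (N1 \<union> N2) ?B v))"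
  proof
    fix v assume v: "v \<in> V"
    show "bag_nodes (N1 \<union> N2) ?B v \<noteq> {} \<and>
      connected_graph (bag_nodes (N1 \<union> N2) ?B v) (induced ?F (bag_nodes (N1 \<union> N2) ?B v))"
      unfolding bn_union[OF d] conn_induced
    proof (cases "v \<in> A \<inter> C")
      case True
      then have vc: "v = c" using AC by blast
      have c1: "connected_graph (bag_nodes N1 B1 v) ?F"
        using td1 True unfolding tree_decomp_def by (auto elim!: conn_mono simp: edge_join_def)
      have c2: "connected_graph (bag_nodes N2 B2 v) ?F"
        using td2 True unfolding tree_decomp_def by (auto elim!: conn_mono simp: edge_join_def)
      have "x \<in> bag_nodes N1 B1 v" "y \<in> bag_nodes N2 B2 v" using cxy True vc x y unfolding bag_nodes_def by auto
      then show "bag_nodes N1 B1 v \<union> bag_nodes N2 B2 v \<noteq> {} \<and>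
          connected_graph (bag_nodes N1 B1 v \<union> bag_nodes N2 B2 v) ?F"
        using conn_union[OF c1 c2] by (auto simp: edge_join_def)
    next
      case False
      show "bag_nodes N1 B1 v \<union> bag_nodes N2 B2 v \<noteq> {} \<and>
          connected_graph (bag_nodes N1 B1 v \<union> bag_nodes N2 B2 v) ?F"
      proof (cases "v \<in> A")
        case True
        then have "bag_nodes N2 B2 v = {}" using bn_out[OF td2] False by blast
        then show ?thesis using td1 True unfolding tree_decomp_def
          by (auto elim!: conn_mono simp: edge_join_def)
      next
        case False2: False
        then have "v \<in> C" using v V by blast
        have "bag_nodes N1 B1 v = {}" using bn_out[OF td1] False2 by blast
        then show ?thesis using td2 \<open>v \<in> C\<close> unfolding tree_decomp_def
          by (auto elim!: conn_mono simp: edge_join_def)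
      qed
    qed
  qed
qed



lemma glue_core:
  assumes V: "V = A \<union> C" and AC: "A \<inter> C \<subseteq> {c}"
    and sep: "\<And>a b. E a b \<Longrightarrow> (a \<in> A \<and> b \<in> A) \<or> (a \<in> C \<and> b \<in> C)"
    and g1: "good_decomp A (induced E A) w (Suc p) N1 F1 B1"
    and g2: "good_decomp C (induced E C) w (Suc p) N2 F2 B2"
    and d: "N1 \<inter> N2 = {}"
    and cC: "c \<in> A \<inter> C \<Longrightarrow> pw_le (bag_nodes N2 B2 c) (induced F2 (bag_nodes N2 B2 c)) p"
  shows "\<exists>F B. good_decomp V E w (Suc p) (N1 \<union> N2) F B \<and>
    (\<forall>v\<in>A - C. \<forall>k. pw_le (bag_nodes N1 B1 v) (induced F1 (bag_nodes N1 B1 v)) k \<longrightarrow>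
        pw_le (bag_nodes (N1 \<union> N2) B v) (induced F (bag_nodes (N1 \<union> N2) B v)) k)"
proof -
  have td1: "tree_decomp A (induced E A) N1 F1 B1" and w1: "width_le N1 B1 w"
    and pw1: "\<forall>v\<in>A. pw_le (bag_nodes N1 B1 v) (induced F1 (bag_nodes N1 B1 v)) (Suc p)"
    using g1 unfolding good_decomp_def by blast+
  have td2: "tree_decomp C (induced E C) N2 F2 B2" and w2: "width_le N2 B2 w"
    and pw2: "\<forall>v\<in>C. pw_le (bag_nodes N2 B2 v) (induced F2 (bag_nodes N2 B2 v)) (Suc p)"
    using g2 unfolding good_decomp_def by blast+
  have gr1: "is_graph N1 F1" and gr2: "is_graph N2 F2" using td_graph td1 td2 by blast+
  let ?X1 = "bag_nodes N1 B1 c" and ?X2 = "bag_nodes N2 B2 c"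
  obtain x y where x: "x \<in> N1" and y: "y \<in> N2"
    and cx: "c \<in> A \<inter> C \<Longrightarrow> c \<in> B1 x \<and> c \<in> B2 y \<and>
       pw_le (?X1 \<union> ?X2) (edge_join (induced F1 ?X1) (induced F2 ?X2) x y) (Suc p)"
  proof (cases "c \<in> A \<inter> C")
    case True
    have ne1: "?X1 \<noteq> {}" using td1 True unfolding tree_decomp_def by blast
    obtain y where y: "y \<in> ?X2" using td2 True unfolding tree_decomp_def by blast
    have dX: "?X1 \<inter> ?X2 = {}" using d bn_sub[of N1 B1 c] bn_sub[of N2 B2 c] by blast
    obtain x where x: "x \<in> ?X1" and pwx: "pw_le (?X1 \<union> ?X2) (edge_join (induced F1 ?X1) (induced F2 ?X2) x y) (Suc p)"
      using pw_insert[OF _ cC[OF True] ne1 dX y] pw1 True by blast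
    show ?thesis
      by (rule that[of x y]) (use x y pwx in \<open>auto simp: bag_nodes_def\<close>)
  next
    case False
    obtain x where "x \<in> N1" using td1 unfolding tree_decomp_def is_tree_def by blast
    moreover obtain y where "y \<in> N2" using td2 unfolding tree_decomp_def is_tree_def by blast
    ultimately show ?thesis using that False by blast
  qed
  define F where "F = edge_join F1 F2 x y"
  define B where "B = (\<lambda>z. if z \<in> N1 then B1 z else B2 z)"
  have td: "tree_decomp V E (N1 \<union> N2) F B"
    unfolding F_def B_def by (rule decomp_glue[OF td1 td2 d x y V AC]) (use cx sep in auto)
  have wd: "width_le (N1 \<union> N2) B w" using w1 w2 unfolding width_le_def B_def by auto
  have bnA: "bag_nodes (N1 \<union> N2) B v = bag_nodes N1 B1 v" if "v \<in> A - C" for v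
    using bn_union[OF d, of B1 B2 v] bn_out[OF td2, of v] that unfolding B_def by auto
  have bnC: "bag_nodes (N1 \<union> N2) B v = bag_nodes N2 B2 v" if "v \<in> C - A" for v
    using bn_union[OF d, of B1 B2 v] bn_out[OF td1, of v] that unfolding B_def by auto
  have iA: "induced F (bag_nodes N1 B1 v) = induced F1 (bag_nodes N1 B1 v)" for v
    unfolding F_def by (rule induced_join1[OF gr2 bn_sub d y])
  have iC: "induced F (bag_nodes N2 B2 v) = induced F2 (bag_nodes N2 B2 v)" for v
    unfolding F_def by (rule induced_join2[OF gr1 bn_sub d x])
  have trans: "\<forall>v\<in>A - C. \<forall>k. pw_le (bag_nodes N1 B1 v) (induced F1 (bag_nodes N1 B1 v)) k \<longrightarrow>
        pw_le (bag_nodes (N1 \<union> N2) B v) (induced F (bag_nodes (N1 \<union> N2) B v)) k"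
    using bnA iA by simp
  have pw: "\<forall>v\<in>V. pw_le (bag_nodes (N1 \<union> N2) B v) (induced F (bag_nodes (N1 \<union> N2) B v)) (Suc p)"
  proof
    fix v assume v: "v \<in> V"
    show "pw_le (bag_nodes (N1 \<union> N2) B v) (induced F (bag_nodes (N1 \<union> N2) B v)) (Suc p)"
    proof (cases "v \<in> A \<inter> C")
      case True
      then have vc: "v = c" using AC by blast
      have bn: "bag_nodes (N1 \<union> N2) B v = ?X1 \<union> ?X2" using bn_union[OF d] vc unfolding B_def by simp
      show ?thesis unfolding bn
        by (rule pw_mono_rel[OF conjunct2[OF conjunct2[OF cx[OF True[unfolded vc]]]]])
           (unfold F_def, rule induced_join12[OF gr1 gr2 bn_sub bn_sub d])
    next
      case False
      show ?thesis
      proof (cases "v \<in> A")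
        case True
        then show ?thesis using bnA[of v] iA[of v] pw1 False by simp
      next
        case False2: False
        then have "v \<in> C - A" using v V by blast
        then show ?thesis using bnC[of v] iC[of v] pw2 by simp
      qed
    qed
  qed
  show ?thesis unfolding good_decomp_def using td wd pw trans by blast
qed

lemma relabel_all:
  assumes g: "good_decomp V E w q N F B" and inj: "inj_on f N"
  shows "good_decomp V E w q (f ` N) (rel_map f N F) (\<lambda>a. B (inv_into N f a)) \<and>
    (\<forall>v k. pw_le (bag_nodes N B v) (induced F (bag_nodes N B v)) k \<longrightarrow>
       pw_le (bag_nodes (f ` N) (\<lambda>a. B (inv_into N f a)) v)
             (induced (rel_map f N F) (bag_nodes (f ` N) (\<lambda>a. B (inv_into N f a)) v)) k)"
proof -
  have td: "tree_decomp V E N F B" and wd: "width_le N B w" using g unfolding good_decomp_def by blast+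
  have tr: "pw_le (bag_nodes (f ` N) (\<lambda>a. B (inv_into N f a)) v)
             (induced (rel_map f N F) (bag_nodes (f ` N) (\<lambda>a. B (inv_into N f a)) v)) k"
    if "pw_le (bag_nodes N B v) (induced F (bag_nodes N B v)) k" for v k
    unfolding bag_nodes_map[OF inj] induced_map[OF inj bn_sub]
    by (rule pw_map[OF that inj_on_subset[OF inj bn_sub]])
  show ?thesis unfolding good_decomp_def using td_map[OF td inj] width_map[OF wd inj] tr g
    unfolding good_decomp_def by blast
qed

lemma glue_step:
  fixes N1 N2 :: "nat set"
  assumes V: "V = A \<union> C" and AC: "A \<inter> C \<subseteq> {c}"
    and sep: "\<And>a b. E a b \<Longrightarrow> (a \<in> A \<and> b \<in> A) \<or> (a \<in> C \<and> b \<in> C)"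
    and g1: "good_decomp A (induced E A) w (Suc p) N1 F1 B1"
    and g2: "good_decomp C (induced E C) w (Suc p) N2 F2 B2"
    and cC: "c \<in> A \<inter> C \<Longrightarrow> pw_le (bag_nodes N2 B2 c) (induced F2 (bag_nodes N2 B2 c)) p"
  shows "\<exists>(N::nat set) F B. good_decomp V E w (Suc p) N F B \<and>
    (\<forall>v\<in>A - C. pw_le (bag_nodes N1 B1 v) (induced F1 (bag_nodes N1 B1 v)) p \<longrightarrow>
        pw_le (bag_nodes N B v) (induced F (bag_nodes N B v)) p)"
proof -
  define f1 :: "nat \<Rightarrow> nat" where "f1 n = 2 * n" for n
  define f2 :: "nat \<Rightarrow> nat" where "f2 n = 2 * n + 1" for n
  have i1: "inj_on f1 N1" unfolding f1_def inj_on_def by simp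
  have i2: "inj_on f2 N2" unfolding f2_def inj_on_def by simp
  have dP: "f1 ` N1 \<inter> f2 ` N2 = {}" unfolding f1_def f2_def by auto presburger
  note r1 = relabel_all[OF g1 i1] and r2 = relabel_all[OF g2 i2]
  obtain F B where FB: "good_decomp V E w (Suc p) (f1 ` N1 \<union> f2 ` N2) F B"
    and tr: "\<forall>v\<in>A - C. \<forall>k. pw_le (bag_nodes (f1 ` N1) (\<lambda>a. B1 (inv_into N1 f1 a)) v)
        (induced (rel_map f1 N1 F1) (bag_nodes (f1 ` N1) (\<lambda>a. B1 (inv_into N1 f1 a)) v)) k \<longrightarrow>
        pw_le (bag_nodes (f1 ` N1 \<union> f2 ` N2) B v) (induced F (bag_nodes (f1 ` N1 \<union> f2 ` N2) B v)) k"
    using glue_core[OF V AC sep conjunct1[OF r1] conjunct1[OF r2] dP] cC r2 by blast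
  show ?thesis using FB tr r1 by blast
qed



lemma graph_induced: "is_graph V E \<Longrightarrow> A \<subseteq> V \<Longrightarrow> is_graph A (induced E A)"
  unfolding is_graph_def induced_def by (auto intro: finite_subset)

lemma induced_self: "is_graph V E \<Longrightarrow> induced E V = E"
  unfolding is_graph_def induced_def by (auto intro!: ext)

lemma rt_sym_graph: "is_graph V E \<Longrightarrow> (induced E W)\<^sup>*\<^sup>* a b \<Longrightarrow> (induced E W)\<^sup>*\<^sup>* b a"
proof -
  assume g: "is_graph V E" and r: "(induced E W)\<^sup>*\<^sup>* a b"
  show ?thesis by (rule rtranclp_symm[OF r]) (use g in \<open>auto simp: induced_def is_graph_def\<close>)
qed

lemma empty_case:
  assumes "is_graph {} E"
  shows "\<exists>(N::nat set) F B. good_decomp {} E w q N F B"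
proof -
  have t: "is_tree {0::nat} (\<lambda>_ _. False)"
    unfolding is_tree_def is_graph_def connected_graph_def by auto
  have "good_decomp {} E w q {0::nat} (\<lambda>_ _. False) (\<lambda>_. {})"
    unfolding good_decomp_def tree_decomp_def width_le_def using t assms
    unfolding is_graph_def by auto
  then show ?thesis by blast
qed

lemma self_block:
  assumes g: "is_graph V E" and ne: "V \<noteq> {}" and c: "connected_graph V E"
    and nc: "\<forall>x\<in>V. connected_graph (V - {x}) (induced E (V - {x}))"
  shows "is_block V E V"
proof -
  have fin: "finite V" using g unfolding is_graph_def by blast
  have "card V \<noteq> 0" using ne fin by simp
  then consider "card V \<ge> 3" | "card V = 2" | "card V = 1" by linarith
  then show ?thesis
  proof cases
    case 1
    have "two_connected V (induced E V)"
      unfolding two_connected_def using 1 c nc by auto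
    then show ?thesis unfolding is_block_def by blast
  next
    case 2
    then obtain a b where ab: "V = {a, b}" "a \<noteq> b" by (meson card_2_iff)
    obtain t where "E a t" using has_nbr[OF c, of a b] ab by blast
    then have Eab: "E a b" using graph_edge[OF g] ab by blast
    have "\<not> connected_graph V (del_edge E a b)"
    proof
      assume "connected_graph V (del_edge E a b)"
      then obtain t where "del_edge E a b a t" using has_nbr[of V _ a b] ab by blast
      then show False using graph_edge[OF g, of a t] ab unfolding del_edge_def by auto
    qed
    then show ?thesis unfolding is_block_def using ab Eab by blast
  next
    case 3
    then obtain v where v: "V = {v}" by (meson card_1_singletonE)
    have "\<not> E v u" for u using graph_edge[OF g, of v u] v by auto
    then show ?thesis unfolding is_block_def using v by blast
  qed
qed

lemma main_ind:
  fixes V :: "'a set" and R :: "'a set"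
  assumes "card V = n" "is_graph V E" "\<forall>S. is_block V E S \<longrightarrow> has_good_decomp S (induced E S) w p"
    "R \<subseteq> V" "card R \<le> 1" "R \<noteq> {} \<Longrightarrow> connected_graph V E"
    "\<forall>r\<in>R. connected_graph (V - {r}) (induced E (V - {r}))"
  shows "\<exists>(N::nat set) F B. good_decomp V E w (Suc p) N F B \<and>
           (\<forall>r\<in>R. pw_le (bag_nodes N B r) (induced F (bag_nodes N B r)) p)"
  using assms
proof (induction n arbitrary: V E R rule: less_induct)
  case (less n)
  note gV = less.prems(2) and hyp = less.prems(3) and RV = less.prems(4) and cR = less.prems(5)
    and Rc = less.prems(6) and Rnc = less.prems(7)
  have fin: "finite V" using gV unfolding is_graph_def by blast
  have finR: "finite R" using fin RV finite_subset by blast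
  have Esym: "E a b \<Longrightarrow> E b a" for a b using graph_edge[OF gV] by blast
  consider (empty) "V = {}" | (disc) "V \<noteq> {}" "\<not> connected_graph V E"
    | (blk) "V \<noteq> {}" "connected_graph V E" "\<forall>x\<in>V. connected_graph (V - {x}) (induced E (V - {x}))"
    | (cut) "connected_graph V E" "\<exists>c\<in>V. \<not> connected_graph (V - {c}) (induced E (V - {c}))"
    by blast
  then show ?case
  proof cases
    case empty
    then show ?thesis using empty_case[of E w "Suc p"] gV RV by auto
  next
    case blk
    have "is_block V E V" by (rule self_block[OF gV blk])
    then have "has_good_decomp V E w p" using hyp induced_self[OF gV] by metis
    then obtain N :: "nat set" and F B where g: "good_decomp V E w p N F B"
      unfolding has_good_decomp_def by blast
    then have "good_decomp V E w (Suc p) N F B" unfolding good_decomp_def using pw_mono_k by blast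
    moreover have "\<forall>r\<in>R. pw_le (bag_nodes N B r) (induced F (bag_nodes N B r)) p"
      using g RV unfolding good_decomp_def by blast
    ultimately show ?thesis by blast
  next
    case disc
    have R0: "R = {}" using Rc disc by blast
    obtain x0 where x0: "x0 \<in> V" using disc by blast
    define K where "K = {z\<in>V. (induced E V)\<^sup>*\<^sup>* x0 z}"
    define A where "A = V - K"
    have x0K: "x0 \<in> K" unfolding K_def using x0 by simp
    have KV: "K \<subseteq> V" unfolding K_def by blast
    have Kcl: "b \<in> K" if "a \<in> K" "E a b" for a b
    proof -
      have "induced E V a b" using that graph_edge[OF gV that(2)] KV unfolding induced_def by blast
      then show ?thesis using that unfolding K_def
        by (auto intro: rtranclp.rtrancl_into_rtrancl dest: graph_edge[OF gV])
    qed
    have sep: "(a \<in> A \<and> b \<in> A) \<or> (a \<in> K \<and> b \<in> K)" if "E a b" for a b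
      using Kcl[of a b] Kcl[of b a] Esym[OF that] that graph_edge[OF gV that] unfolding A_def by blast
    have Ane: "A \<noteq> {}"
    proof
      assume "A = {}"
      then have VK: "V = K" using KV unfolding A_def by blast
      have "connected_graph V E"
        unfolding connected_graph_def
      proof (intro ballI)
        fix a b assume "a \<in> V" "b \<in> V"
        then have "(induced E V)\<^sup>*\<^sup>* x0 a" "(induced E V)\<^sup>*\<^sup>* x0 b" using VK unfolding K_def by auto
        then show "(induced E V)\<^sup>*\<^sup>* a b" using rt_sym_graph[OF gV] by (meson rtranclp_trans)
      qed
      then show False using disc by blast
    qed
    have V: "V = A \<union> K" using KV unfolding A_def by blast
    have AC: "A \<inter> K \<subseteq> {x0}" and AC0: "A \<inter> K = {}" unfolding A_def by blast+
    have "A \<subset> V" using x0K x0 unfolding A_def by blast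
    then have "card A < card V" by (rule psubset_card_mono[OF fin])
    then have cA: "card A < n" using less.prems(1) by simp
    have "K \<subset> V" using Ane KV unfolding A_def by blast
    then have "card K < card V" by (rule psubset_card_mono[OF fin])
    then have cK: "card K < n" using less.prems(1) by simp
    have bA: "\<forall>S. is_block A (induced E A) S \<longrightarrow> has_good_decomp S (induced (induced E A) S) w p"
    proof (intro allI impI)
      fix S assume bS: "is_block A (induced E A) S"
      have cs: "(\<not> connected_graph V E \<and> A \<inter> K = {}) \<or> (x0 \<in> A \<and> connected_graph A (induced E A) \<and> (\<exists>a\<in>A. a \<noteq> x0))"
        by (rule disjI1) (use disc(2) AC0 in blast)
      have "is_block V E S" by (rule block_transfer[OF gV V AC sep cs bS])
      moreover have "S \<subseteq> A" using bS unfolding is_block_def by blast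
      ultimately show "has_good_decomp S (induced (induced E A) S) w p"
        using hyp induced_sub[of S A E] by metis
    qed
    have bK: "\<forall>S. is_block K (induced E K) S \<longrightarrow> has_good_decomp S (induced (induced E K) S) w p"
    proof (intro allI impI)
      fix S assume bS: "is_block K (induced E K) S"
      have cs: "(\<not> connected_graph V E \<and> K \<inter> A = {}) \<or> (x0 \<in> K \<and> connected_graph K (induced E K) \<and> (\<exists>a\<in>K. a \<noteq> x0))"
        by (rule disjI1) (use disc(2) AC0 in blast)
      have V2: "V = K \<union> A" using V by blast
      have AC2: "K \<inter> A \<subseteq> {x0}" using AC0 by blast
      have sep2: "(a \<in> K \<and> b \<in> K) \<or> (a \<in> A \<and> b \<in> A)" if "E a b" for a b using sep[OF that] by blast
      have "is_block V E S" by (rule block_transfer[OF gV V2 AC2 sep2 cs bS])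
      moreover have "S \<subseteq> K" using bS unfolding is_block_def by blast
      ultimately show "has_good_decomp S (induced (induced E K) S) w p"
        using hyp induced_sub[of S K E] by metis
    qed
    obtain N1 :: "nat set" and F1 B1 where g1: "good_decomp A (induced E A) w (Suc p) N1 F1 B1"
      using less.IH[OF cA refl graph_induced[OF gV] bA, of "{}"] unfolding A_def by auto
    obtain N2 :: "nat set" and F2 B2 where g2: "good_decomp K (induced E K) w (Suc p) N2 F2 B2"
      using less.IH[OF cK refl graph_induced[OF gV KV] bK, of "{}"] by auto
    obtain N :: "nat set" and F B where "good_decomp V E w (Suc p) N F B"
      using glue_step[OF V AC sep g1 g2] AC0 by blast
    then show ?thesis using R0 by blast
  next
    case cut
    then obtain c where c: "c \<in> V" "\<not> connected_graph (V - {c}) (induced E (V - {c}))" by blast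
    have cR: "c \<notin> R" using c Rnc by blast
    define V' where "V' = V - {c}"
    define Kf where "Kf z = {u\<in>V'. (induced E V')\<^sup>*\<^sup>* z u}" for z
    have symV': "(induced E V')\<^sup>*\<^sup>* a b \<Longrightarrow> (induced E V')\<^sup>*\<^sup>* b a" for a b using rt_sym_graph[OF gV] by blast
    obtain x y where xy: "x \<in> V'" "y \<in> V'" "\<not> (induced E V')\<^sup>*\<^sup>* x y"
      using c(2) unfolding V'_def connected_graph_def by auto
    have dj: "Kf x \<inter> Kf y = {}"
    proof (rule ccontr)
      assume "Kf x \<inter> Kf y \<noteq> {}"
      then obtain z where "(induced E V')\<^sup>*\<^sup>* x z" "(induced E V')\<^sup>*\<^sup>* y z" unfolding Kf_def by blast
      then show False using xy symV' by (meson rtranclp_trans)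
    qed
    obtain k oo where ko: "k \<in> V'" "oo \<in> V'" "oo \<notin> Kf k" "Kf k \<inter> R = {}"
    proof (cases "Kf x \<inter> R = {}")
      case True
      have "y \<notin> Kf x" using xy unfolding Kf_def by blast
      then show ?thesis using that[of x y] xy True by blast
    next
      case False
      then obtain r where r: "r \<in> Kf x" "r \<in> R" by blast
      have "card R \<le> Suc 0" using less.prems(5) by simp
      then have "\<forall>a1\<in>R. \<forall>a2\<in>R. a1 = a2" using card_le_Suc0_iff_eq[OF finR] by blast
      then have "R = {r}" using r(2) by blast
      then have "Kf y \<inter> R = {}" using dj r by blast
      moreover have "x \<notin> Kf y" using xy symV' unfolding Kf_def by blast
      ultimately show ?thesis using that[of y x] xy by blast
    qed
    define K where "K = Kf k"
    define C where "C = insert c K"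
    define A where "A = V - K"
    have KV': "K \<subseteq> V'" unfolding K_def Kf_def by blast
    have kK: "k \<in> K" unfolding K_def Kf_def using ko by simp
    have cK: "c \<notin> K" using KV' unfolding V'_def by blast
    have Kcl: "b \<in> K" if "a \<in> K" "E a b" "b \<noteq> c" for a b
    proof -
      have "induced E V' a b" using that graph_edge[OF gV that(2)] KV' unfolding induced_def V'_def by blast
      then show ?thesis using that unfolding K_def Kf_def
        by (auto intro: rtranclp.rtrancl_into_rtrancl simp: induced_def)
    qed
    have V: "V = A \<union> C" using KV' c unfolding A_def C_def V'_def by blast
    have AC: "A \<inter> C \<subseteq> {c}" and AC1: "A \<inter> C = {c}" using cK c(1) unfolding A_def C_def by blast+
    have cA: "c \<in> A" and cC: "c \<in> C" using AC1 by blast+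
    have oA: "oo \<in> A" "oo \<noteq> c" using ko KV' unfolding A_def K_def V'_def by auto
    have kC: "k \<in> C" "k \<noteq> c" using kK cK unfolding C_def by auto
    have sep: "(a \<in> A \<and> b \<in> A) \<or> (a \<in> C \<and> b \<in> C)" if e: "E a b" for a b
    proof -
      have ab: "a \<in> V" "b \<in> V" using graph_edge[OF gV e] by blast+
      show ?thesis
      proof (cases "a \<in> K")
        case True
        then show ?thesis using Kcl[OF True e] unfolding C_def by blast
      next
        case False
        show ?thesis
        proof (cases "b \<in> K")
          case True
          then have "a = c" using Kcl[OF True Esym[OF e]] False by blast
          then show ?thesis using True unfolding C_def by blast
        next
          case False2: False
          then show ?thesis using False ab unfolding A_def by blast
        qed
      qed
    qed
    have sepC: "(a \<in> C \<and> b \<in> C) \<or> (a \<in> A \<and> b \<in> A)" if "E a b" for a b using sep[OF that] by blast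
    have AV: "A \<subseteq> V" and CV: "C \<subseteq> V" using V by blast+
    have connA: "connected_graph A (induced E A)"
    proof -
      have "connected_graph A E" by (rule sep_conn[OF cut(1) _ AV AC cA]) (use V sep in auto)
      then show ?thesis by simp
    qed
    have connC: "connected_graph C (induced E C)"
    proof -
      have "connected_graph C E" by (rule sep_conn[OF cut(1) _ CV _ cC]) (use V sepC AC1 in auto)
      then show ?thesis by simp
    qed
    have kV: "k \<in> V" using kK KV' unfolding V'_def by blast
    have kA: "k \<notin> A" using kK unfolding A_def by blast
    have "A \<subset> V" using kV kA AV by blast
    then have "card A < card V" by (rule psubset_card_mono[OF fin])
    then have cardA: "card A < n" using less.prems(1) by simp
    have cardC: "card C < n"
    proof -
      have "oo \<in> V" "oo \<notin> C" using oA AV AC1 by blast+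
      then have "C \<subset> V" using CV by blast
      then have "card C < card V" by (rule psubset_card_mono[OF fin])
      then show ?thesis using less.prems(1) by simp
    qed
    have RA: "R \<subseteq> A" using RV ko(4) unfolding A_def K_def by blast
    have RnC: "r \<notin> C" if "r \<in> R" for r using that cR ko(4) unfolding C_def K_def by blast
    have ncA: "\<forall>r\<in>R. connected_graph (A - {r}) (induced (induced E A) (A - {r}))"
    proof
      fix r assume r: "r \<in> R"
      have c1: "connected_graph (V - {r}) (induced E (V - {r}))" using Rnc r by blast
      have "connected_graph (A - {r}) (induced E (V - {r}))"
        by (rule sep_conn[OF c1, where C=C and c=c]) (use V AC cA cR r RnC[OF r] sep in \<open>auto simp: induced_def\<close>)
      then have "connected_graph (A - {r}) (induced E (A - {r}))"
        by (rule conn_mono) (auto simp: induced_def)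
      then show "connected_graph (A - {r}) (induced (induced E A) (A - {r}))" by simp
    qed
    have ncC: "connected_graph (C - {c}) (induced (induced E C) (C - {c}))"
    proof -
      have CK: "C - {c} = K" using cK unfolding C_def by blast
      have reach: "(induced E K)\<^sup>*\<^sup>* k u" if "u \<in> K" for u
      proof -
        have "(induced E V')\<^sup>*\<^sup>* k u" using that unfolding K_def Kf_def by blast
        then show ?thesis
        proof (induction rule: rtranclp_induct)
          case base then show ?case by simp
        next
          case (step s t)
          have sK: "s \<in> K" using step(1) step(2) unfolding K_def Kf_def induced_def by auto
          have "t \<in> K" using Kcl[OF sK] step(2) unfolding induced_def V'_def by auto
          then have "induced E K s t" using sK step(2) unfolding induced_def by auto
          then show ?case using step.IH by (meson rtranclp.rtrancl_into_rtrancl)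
        qed
      qed
      have "connected_graph K E"
        unfolding connected_graph_def
      proof (intro ballI)
        fix a b assume "a \<in> K" "b \<in> K"
        then have "(induced E K)\<^sup>*\<^sup>* a k" "(induced E K)\<^sup>*\<^sup>* k b"
          using reach rt_sym_graph[OF gV] by blast+
        then show "(induced E K)\<^sup>*\<^sup>* a b" by (rule rtranclp_trans)
      qed
      then have "connected_graph K (induced (induced E C) K)"
        by (rule conn_mono) (auto simp: induced_def C_def)
      then show ?thesis unfolding CK .
    qed
    have bA: "\<forall>S. is_block A (induced E A) S \<longrightarrow> has_good_decomp S (induced (induced E A) S) w p"
    proof (intro allI impI)
      fix S assume bS: "is_block A (induced E A) S"
      have cs: "(\<not> connected_graph V E \<and> A \<inter> C = {}) \<or> (c \<in> A \<and> connected_graph A (induced E A) \<and> (\<exists>a\<in>A. a \<noteq> c))"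
        by (rule disjI2) (use cA connA oA in blast)
      have "is_block V E S" by (rule block_transfer[OF gV V AC sep cs bS])
      moreover have "S \<subseteq> A" using bS unfolding is_block_def by blast
      ultimately show "has_good_decomp S (induced (induced E A) S) w p"
        using hyp induced_sub[of S A E] by metis
    qed
    have bC: "\<forall>S. is_block C (induced E C) S \<longrightarrow> has_good_decomp S (induced (induced E C) S) w p"
    proof (intro allI impI)
      fix S assume bS: "is_block C (induced E C) S"
      have V2: "V = C \<union> A" using V by blast
      have AC2: "C \<inter> A \<subseteq> {c}" using AC by blast
      have cs: "(\<not> connected_graph V E \<and> C \<inter> A = {}) \<or> (c \<in> C \<and> connected_graph C (induced E C) \<and> (\<exists>a\<in>C. a \<noteq> c))"
        by (rule disjI2) (use cC connC kC in blast)
      have "is_block V E S" by (rule block_transfer[OF gV V2 AC2 sepC cs bS])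
      moreover have "S \<subseteq> C" using bS unfolding is_block_def by blast
      ultimately show "has_good_decomp S (induced (induced E C) S) w p"
        using hyp induced_sub[of S C E] by metis
    qed
    have c1: "card R \<le> 1" by fact
    obtain N1 :: "nat set" and F1 B1 where g1: "good_decomp A (induced E A) w (Suc p) N1 F1 B1"
      and pr: "\<forall>r\<in>R. pw_le (bag_nodes N1 B1 r) (induced F1 (bag_nodes N1 B1 r)) p"
      using less.IH[OF cardA refl graph_induced[OF gV AV] bA RA c1 _ ncA] connA by blast
    obtain N2 :: "nat set" and F2 B2 where g2: "good_decomp C (induced E C) w (Suc p) N2 F2 B2"
      and pc: "pw_le (bag_nodes N2 B2 c) (induced F2 (bag_nodes N2 B2 c)) p"
      using less.IH[OF cardC refl graph_induced[OF gV CV] bC, of "{c}"] cC connC ncC by auto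
    obtain N :: "nat set" and F B where g: "good_decomp V E w (Suc p) N F B"
      and tr: "\<forall>v\<in>A - C. pw_le (bag_nodes N1 B1 v) (induced F1 (bag_nodes N1 B1 v)) p \<longrightarrow>
        pw_le (bag_nodes N B v) (induced F (bag_nodes N B v)) p"
      using glue_step[OF V AC sep g1 g2] pc by blast
    have "\<forall>r\<in>R. pw_le (bag_nodes N B r) (induced F (bag_nodes N B r)) p"
      using tr pr RA RnC by blast
    then show ?thesis using g by blast
  qed
qed

theorem lemma14:
  fixes V :: "'a set" and E :: "'a \<Rightarrow> 'a \<Rightarrow> bool" and w p :: nat
  assumes "is_graph V E"
    and "\<forall>S. is_block V E S \<longrightarrow> has_good_decomp S (induced E S) w p"
  shows "has_good_decomp V E w (p + 1)"
proof -
  obtain N :: "nat set" and F B where "good_decomp V E w (Suc p) N F B"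
    using main_ind[OF refl assms, of "{}"] by auto
  then show ?thesis unfolding has_good_decomp_def by auto
qed

end
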